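(* Suppose $\lambda_1=0$ and $\beta$ satisfies condition $(E)$. Let $\varphi$ be an entire function and $C_\varphi f=f\circ\varphi$. Then $C_\varphi$ is a bounded operator from $\mathcal{H}(E,\beta)$ into itself if and only if either (i) $\varphi$ is constant, or (ii) $\varphi(z)=z+b$ for some $b\in\mathbb{C}$ with $\operatorname{Re}(b)\ge0$. Moreover, $\|C_\varphi\|\ge1$ in case (i), and $\|C_\varphi\|=1$ in case (ii).
   Context: Fix a sequence $\Lambda=(\lambda_n)_{n\ge1}$ of real numbers with $0\le\lambda_1<\lambda_2<\cdots$ and $\lambda_n\to+\infty$, such that $\limsup_{n\to\infty}\frac{\log n}{\lambda_n}<+\infty$. For a sequence $\beta=(\beta_n)$ of positive reals, condition $(E)$ is: $\liminf_{n\to\infty}\frac{\log\beta_n}{\lambda_n}=+\infty$. Under $(E)$, $\mathcal{H}(E,\beta)$ denotes the Hilbert space of entire functions $f(z)=\sum_{n=1}^\infty a_ne^{-\lambda_nz}$ ($a_n\in\mathbb{C}$; the representation is unique) with norm $\|f\|=\big(\sum_{n=1}^\infty|a_n|^2\beta_n^2\big)^{1/2}<\infty$. When $\lambda_1=0$ this space contains the constant functions. *)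

theory Defs
  imports "HOL-Analysis.Analysis"
begin

text \<open>Indexing: the paper's sequence (lambda_n)_{n>=1} is rendered as lam :: nat => real
  indexed from 0, i.e. lam k = lambda_{k+1}; likewise beta k = beta_{k+1}.\<close>

definition dirichlet_rep :: "(nat \<Rightarrow> real) \<Rightarrow> (nat \<Rightarrow> real) \<Rightarrow> (complex \<Rightarrow> complex) \<Rightarrow> (nat \<Rightarrow> complex) \<Rightarrow> bool" where
  "dirichlet_rep lam beta f a \<longleftrightarrow>
     summable (\<lambda>n. (cmod (a n))\<^sup>2 * (beta n)\<^sup>2) \<and>
     (\<forall>z. (\<lambda>n. a n * exp (- of_real (lam n) * z)) sums f z)"

definition HE :: "(nat \<Rightarrow> real) \<Rightarrow> (nat \<Rightarrow> real) \<Rightarrow> (complex \<Rightarrow> complex) set" where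
  "HE lam beta = {f. \<exists>a. dirichlet_rep lam beta f a}"

definition HE_norm :: "(nat \<Rightarrow> real) \<Rightarrow> (nat \<Rightarrow> real) \<Rightarrow> (complex \<Rightarrow> complex) \<Rightarrow> real" where
  "HE_norm lam beta f =
     sqrt (\<Sum>n. (cmod ((THE a. dirichlet_rep lam beta f a) n))\<^sup>2 * (beta n)\<^sup>2)"

definition comp_op_bounded :: "(nat \<Rightarrow> real) \<Rightarrow> (nat \<Rightarrow> real) \<Rightarrow> (complex \<Rightarrow> complex) \<Rightarrow> bool" where
  "comp_op_bounded lam beta \<phi> \<longleftrightarrow>
     (\<forall>f\<in>HE lam beta. f \<circ> \<phi> \<in> HE lam beta) \<and>
     (\<exists>M. \<forall>f\<in>HE lam beta. HE_norm lam beta (f \<circ> \<phi>) \<le> M * HE_norm lam beta f)"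

definition comp_op_norm :: "(nat \<Rightarrow> real) \<Rightarrow> (nat \<Rightarrow> real) \<Rightarrow> (complex \<Rightarrow> complex) \<Rightarrow> real" where
  "comp_op_norm lam beta \<phi> =
     Sup {HE_norm lam beta (f \<circ> \<phi>) | f. f \<in> HE lam beta \<and> HE_norm lam beta f \<le> 1}"

end

theory Submission
  imports Defs "HOL-Complex_Analysis.Complex_Analysis"
begin


locale dset =
  fixes lam beta :: "nat \<Rightarrow> real"
  assumes lam_mono: "strict_mono lam"
    and lam0: "lam 0 = 0"
    and lam_inf: "filterlim lam at_top sequentially"
    and lam_growth: "\<exists>C. eventually (\<lambda>n. ln (real (Suc n)) / lam n \<le> C) sequentially"
    and beta_pos: "\<And>n. beta n > 0"
    and condE: "filterlim (\<lambda>n. ln (beta n) / lam n) at_top sequentially"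
begin

lemma lam_nonneg: "lam n \<ge> 0"
  using lam0 lam_mono by (metis le0 strict_mono_less_eq)

lemma lam_pos: "n > 0 \<Longrightarrow> lam n > 0"
  using lam0 lam_mono by (metis strict_mono_less)

lemma lam_ge1: "n > 0 \<Longrightarrow> lam n \<ge> lam 1"
  using lam_mono by (simp add: strict_mono_less_eq)

lemma SUM: "summable (\<lambda>n. exp (s * lam n) / (beta n)^2)"
proof -
  obtain C where C: "eventually (\<lambda>n. ln (real (Suc n)) / lam n \<le> C) sequentially"
    using lam_growth by blast
  define C' where "C' = max C 0"
  have ev3: "eventually (\<lambda>n. s/2 + C' \<le> ln (beta n) / lam n) sequentially"
    using condE by (simp add: filterlim_at_top)
  have ev0: "eventually (\<lambda>n. n > 0) sequentially"
    by (simp add: eventually_gt_at_top)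
  have "eventually (\<lambda>n. norm (exp (s * lam n) / (beta n)^2) \<le> inverse (real (Suc n) ^ 2)) sequentially"
    using C ev3 ev0
  proof eventually_elim
    case (elim n)
    have lp: "lam n > 0" using lam_pos elim(3) by blast
    have a0: "ln (real (Suc n)) / lam n \<le> C'" using elim(1) by (simp add: C'_def)
    have a: "ln (real (Suc n)) \<le> C' * lam n"
      using a0 lp by (simp add: divide_le_eq)
    have b: "(s/2 + C') * lam n \<le> ln (beta n)"
      using elim(2) lp by (simp add: le_divide_eq)
    have c: "s * lam n + 2 * ln (real (Suc n)) \<le> 2 * ln (beta n)"
      using a b by (simp add: algebra_simps)
    have "exp (s * lam n) * real (Suc n) ^ 2 = exp (s * lam n) * exp (ln (real (Suc n))) ^ 2"
      by simp
    also have "\<dots> = exp (s * lam n + 2 * ln (real (Suc n)))"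
      by (simp only: exp_add exp_double)
    also have "\<dots> \<le> exp (2 * ln (beta n))"
      using c by simp
    also have "\<dots> = (beta n)^2"
      using beta_pos[of n] by (simp add: exp_double)
    finally have "exp (s * lam n) * real (Suc n) ^ 2 \<le> (beta n)^2" .
    then have "exp (s * lam n) / (beta n)^2 \<le> inverse (real (Suc n) ^ 2)"
      using beta_pos[of n] by (simp add: divide_simps)
    then show ?case by simp
  qed
  moreover have "summable (\<lambda>n. inverse (real (Suc n) ^ 2))"
    using inverse_power_summable[of 2, where 'a=real] summable_Suc_iff[of "\<lambda>n. inverse (real n ^ 2)"]
    by simp
  ultimately show ?thesis
    by (rule summable_comparison_test_ev)
qed

end



lemma norm_exp_lam: "cmod (exp (- of_real l * z)) = exp (- l * Re z)"
  by (simp add: norm_exp_eq_Re)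

context dset begin

lemma ABS:
  assumes "summable (\<lambda>n. (cmod (a n))\<^sup>2 * (beta n)\<^sup>2)"
  shows "summable (\<lambda>n. cmod (a n) * exp (r * lam n))"
proof (rule summable_comparison_test)
  show "summable (\<lambda>n. ((cmod (a n))\<^sup>2 * (beta n)\<^sup>2 + exp ((2*r) * lam n) / (beta n)^2) / 2)"
    using summable_divide[OF summable_add[OF assms SUM[of "2*r"]], of 2] by simp
  show "\<exists>N. \<forall>n\<ge>N. norm (cmod (a n) * exp (r * lam n)) \<le> ((cmod (a n))\<^sup>2 * (beta n)\<^sup>2 + exp ((2*r) * lam n) / (beta n)^2) / 2"
  proof (intro exI allI impI)
    fix n
    have bp: "beta n > 0" by (rule beta_pos)
    define x where "x = cmod (a n) * beta n"
    define y where "y = exp (r * lam n) / beta n"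
    have e: "exp ((2*r) * lam n) = (exp (r * lam n))^2"
    proof -
      have "exp ((2*r)*lam n) = exp (r*lam n + r*lam n)" by (rule arg_cong[where f=exp]) simp
      then show ?thesis unfolding power2_eq_square exp_add[symmetric] .
    qed
    have "0 \<le> (x - y)^2" by simp
    then have "x * y \<le> (x^2 + y^2)/2"
      by (simp add: power2_diff)
    moreover have "x * y = cmod (a n) * exp (r * lam n)" using bp by (simp add: x_def y_def)
    moreover have "x^2 + y^2 = (cmod (a n))\<^sup>2 * (beta n)\<^sup>2 + exp ((2*r) * lam n) / (beta n)^2"
      unfolding x_def y_def e power_mult_distrib power_divide by (rule refl)
    ultimately show "norm (cmod (a n) * exp (r * lam n)) \<le> ((cmod (a n))\<^sup>2 * (beta n)\<^sup>2 + exp ((2*r) * lam n) / (beta n)^2) / 2"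
      by simp
  qed
qed

lemma CS:
  assumes "summable (\<lambda>n. (cmod (a n))\<^sup>2 * (beta n)\<^sup>2)"
  shows "(\<Sum>n. cmod (a n) * exp (r * lam n)) \<le>
           sqrt (\<Sum>n. (cmod (a n))\<^sup>2 * (beta n)\<^sup>2) * sqrt (\<Sum>n. exp ((2*r) * lam n) / (beta n)^2)"
proof (rule suminf_le_const[OF ABS[OF assms]])
  fix N
  define x where "x = (\<lambda>n. cmod (a n) * beta n)"
  define y where "y = (\<lambda>n. exp (r * lam n) / beta n)"
  have e: "exp ((2*r) * lam n) = (exp (r * lam n))^2" for n
  proof -
    have "exp ((2*r)*lam n) = exp (r*lam n + r*lam n)" by (rule arg_cong[where f=exp]) simp
    then show ?thesis unfolding power2_eq_square exp_add[symmetric] .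
  qed
  have xy: "x n * y n = cmod (a n) * exp (r * lam n)" for n
    using beta_pos[of n] by (simp add: x_def y_def)
  have x2: "\<And>n. (x n)^2 = (cmod (a n))\<^sup>2 * (beta n)\<^sup>2" by (simp add: x_def power_mult_distrib)
  have y2: "(y n)^2 = exp ((2*r) * lam n) / (beta n)^2" for n unfolding y_def e power_divide by (rule refl)
  have "(\<Sum>n<N. x n * y n)\<^sup>2 \<le> (\<Sum>n<N. (x n)\<^sup>2) * (\<Sum>n<N. (y n)\<^sup>2)"
    by (rule Cauchy_Schwarz_ineq_sum)
  also have "\<dots> \<le> (\<Sum>n. (x n)\<^sup>2) * (\<Sum>n. (y n)\<^sup>2)"
  proof (rule mult_mono)
    show "(\<Sum>n<N. (x n)\<^sup>2) \<le> (\<Sum>n. (x n)\<^sup>2)"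
      using assms by (intro sum_le_suminf) (auto simp: x2)
    show "(\<Sum>n<N. (y n)\<^sup>2) \<le> (\<Sum>n. (y n)\<^sup>2)"
      using SUM[of "2*r"] by (intro sum_le_suminf) (auto simp: y2)
    show "0 \<le> (\<Sum>n. (x n)\<^sup>2)"
      using assms by (intro suminf_nonneg) (auto simp: x2)
  qed (auto intro: sum_nonneg)
  finally have "(\<Sum>n<N. x n * y n)\<^sup>2 \<le> (\<Sum>n. (x n)\<^sup>2) * (\<Sum>n. (y n)\<^sup>2)" .
  then have "(\<Sum>n<N. x n * y n) \<le> sqrt ((\<Sum>n. (x n)\<^sup>2) * (\<Sum>n. (y n)\<^sup>2))"
    by (rule real_le_rsqrt)
  then show "(\<Sum>n<N. cmod (a n) * exp (r * lam n)) \<le>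
           sqrt (\<Sum>n. (cmod (a n))\<^sup>2 * (beta n)\<^sup>2) * sqrt (\<Sum>n. exp ((2*r) * lam n) / (beta n)^2)"
    by (simp add: xy x2 y2 real_sqrt_mult)
qed

lemma MK:
  assumes "summable (\<lambda>n. (cmod (a n))\<^sup>2 * (beta n)\<^sup>2)"
  shows "dirichlet_rep lam beta (\<lambda>z. \<Sum>n. a n * exp (- of_real (lam n) * z)) a"
  unfolding dirichlet_rep_def
proof (intro conjI allI assms)
  fix z
  have "summable (\<lambda>n. norm (a n * exp (- of_real (lam n) * z)))"
    using ABS[OF assms, of "- Re z"] by (simp add: norm_mult norm_exp_lam mult.commute)
  then show "(\<lambda>n. a n * exp (- of_real (lam n) * z)) sums (\<Sum>n. a n * exp (- of_real (lam n) * z))"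
    by (rule summable_sums[OF summable_norm_cancel])
qed

lemma single:
  "dirichlet_rep lam beta (\<lambda>z. v * exp (- of_real (lam k) * z)) (\<lambda>n. if n = k then v else 0)"
  unfolding dirichlet_rep_def
proof (intro conjI allI)
  show "summable (\<lambda>n. (cmod (if n = k then v else 0))\<^sup>2 * (beta n)\<^sup>2)"
    by (rule summable_finite[of "{k}"]) auto
  fix z
  have "(\<lambda>n. if n = k then v * exp (- of_real (lam n) * z) else 0) sums (v * exp (- of_real (lam k) * z))"
    using sums_single[of k "\<lambda>n. v * exp (- of_real (lam n) * z)"] by simp
  moreover have "(\<lambda>n. (if n = k then v else 0) * exp (- of_real (lam n) * z)) =
     (\<lambda>n. if n = k then v * exp (- of_real (lam n) * z) else 0)" by (rule ext) simp
  ultimately show "(\<lambda>n. (if n = k then v else 0) * exp (- of_real (lam n) * z)) sums (v * exp (- of_real (lam k) * z))"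
    by simp
qed

end



context dset begin

lemma UNIQ0:
  assumes s: "\<And>z. (\<lambda>n. d n * exp (- of_real (lam n) * z)) sums 0"
    and T: "summable (\<lambda>n. cmod (d n) * exp ((-1) * lam n))"
  shows "d = (\<lambda>n. 0)"
proof (rule ccontr)
  assume "d \<noteq> (\<lambda>n. 0)"
  then obtain n0 where "d n0 \<noteq> 0" by auto
  define m where "m = (LEAST n. d n \<noteq> 0)"
  have dm: "d m \<noteq> 0" unfolding m_def by (rule LeastI[of _ n0]) fact
  have dlt: "d n = 0" if "n < m" for n
    using not_less_Least[of n "\<lambda>n. d n \<noteq> 0"] that unfolding m_def by blast
  define \<delta> where "\<delta> = lam (Suc m) - lam m"
  have \<delta>pos: "\<delta> > 0" unfolding \<delta>_def using lam_mono by (simp add: strict_mono_def)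
  define Tv where "Tv = (\<Sum>n. cmod (d n) * exp ((-1) * lam n))"
  have Tnn: "Tv \<ge> 0" unfolding Tv_def using T by (intro suminf_nonneg) auto
  define K where "K = exp (lam m) * (Tv + 1)"
  have Kpos: "K > 0" unfolding K_def using Tnn by simp
  define x where "x = 1 + (\<bar>ln (K / cmod (d m))\<bar> + 1) / \<delta>"
  have x1: "x \<ge> 1" unfolding x_def using \<delta>pos by simp
  have dx: "\<delta> * (x - 1) = \<bar>ln (K / cmod (d m))\<bar> + 1" unfolding x_def using \<delta>pos by simp
  have small: "exp (- \<delta> * (x - 1)) < cmod (d m) / K"
  proof -
    have "- \<delta> * (x - 1) < ln (cmod (d m) / K)"
      using dx dm Kpos by (simp add: ln_div)
    then have "exp (- \<delta> * (x - 1)) < exp (ln (cmod (d m) / K))" by simp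
    then show ?thesis using dm Kpos by simp
  qed
  define t where "t = (\<lambda>n. d n * exp (of_real ((lam m - lam n) * x)))"
  have "(\<lambda>n. d n * exp (- of_real (lam n) * of_real x) * exp (of_real (lam m * x))) sums (0 * exp (of_real (lam m * x)))"
    by (rule sums_mult2[OF s])
  moreover have "\<And>n. d n * exp (- of_real (lam n) * of_real x) * exp (of_real (lam m * x)) = t n"
    unfolding t_def by (simp add: mult.assoc exp_add[symmetric] algebra_simps)
  ultimately have ts: "t sums 0" by simp
  have tm: "t m = d m" unfolding t_def by simp
  define t' where "t' = (\<lambda>n. t n - (if n = m then t n else 0))"
  have t's: "t' sums (0 - t m)"
    unfolding t'_def by (rule sums_diff[OF ts sums_single])
  have bound: "norm (t' n) \<le> exp (lam m) * exp (- \<delta> * (x - 1)) * (cmod (d n) * exp ((-1) * lam n))" for n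
  proof (cases "n \<le> m")
    case True
    then have "t' n = 0" unfolding t'_def t_def using dlt[of n] by (cases "n = m") auto
    then show ?thesis using T by simp
  next
    case False
    then have nm: "n > m" by simp
    have "lam n \<ge> lam (Suc m)" using nm lam_mono by (simp add: strict_mono_less_eq)
    then have ld: "lam n - lam m \<ge> \<delta>" unfolding \<delta>_def by simp
    have "(lam m - lam n) * x = (lam m - lam n) + (lam m - lam n) * (x - 1)" by (simp add: algebra_simps)
    also have "\<dots> \<le> (lam m - lam n) - \<delta> * (x - 1)"
    proof -
      have "(lam m - lam n) * (x - 1) \<le> (- \<delta>) * (x - 1)"
        using ld x1 by (intro mult_right_mono) auto
      then show ?thesis by simp
    qed
    finally have ex: "(lam m - lam n) * x \<le> lam m + (- \<delta> * (x - 1)) + (-1) * lam n" by simp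
    have "norm (t' n) = cmod (d n) * exp ((lam m - lam n) * x)"
      unfolding t'_def t_def using nm by (simp add: norm_mult norm_exp_eq_Re)
    also have "\<dots> \<le> cmod (d n) * exp (lam m + (- \<delta> * (x - 1)) + (-1) * lam n)"
      using ex by (intro mult_left_mono) auto
    also have "\<dots> = exp (lam m) * exp (- \<delta> * (x - 1)) * (cmod (d n) * exp ((-1) * lam n))"
      unfolding exp_add by (simp add: mult_ac)
    finally show ?thesis .
  qed
  have "norm (suminf t') \<le> (\<Sum>n. exp (lam m) * exp (- \<delta> * (x - 1)) * (cmod (d n) * exp ((-1) * lam n)))"
    by (rule norm_suminf_le[OF bound summable_mult[OF T]])
  also have "\<dots> = exp (lam m) * exp (- \<delta> * (x - 1)) * Tv"
    unfolding Tv_def by (rule suminf_mult[OF T])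
  also have "\<dots> \<le> exp (lam m) * (Tv + 1) * exp (- \<delta> * (x - 1))"
    using Tnn by (simp add: mult_ac)
  also have "\<dots> < K * (cmod (d m) / K)"
    unfolding K_def[symmetric] using small Kpos by (simp add: less_divide_eq mult.commute)
  also have "\<dots> = cmod (d m)" using Kpos by simp
  finally have "norm (suminf t') < cmod (d m)" .
  moreover have "suminf t' = - d m" using t's tm sums_unique by fastforce
  ultimately show False by simp
qed

lemma UNIQ:
  assumes a: "dirichlet_rep lam beta f a" and b: "dirichlet_rep lam beta f b"
  shows "a = b"
proof -
  have "(\<lambda>n. a n - b n) = (\<lambda>n. 0)"
  proof (rule UNIQ0)
    fix z
    have "(\<lambda>n. a n * exp (- of_real (lam n) * z) - b n * exp (- of_real (lam n) * z)) sums (f z - f z)"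
      using a b unfolding dirichlet_rep_def by (intro sums_diff) auto
    then show "(\<lambda>n. (a n - b n) * exp (- of_real (lam n) * z)) sums 0"
      by (simp add: algebra_simps)
  next
    have sa: "summable (\<lambda>n. cmod (a n) * exp ((-1) * lam n))"
      using a unfolding dirichlet_rep_def by (intro ABS) auto
    have sb: "summable (\<lambda>n. cmod (b n) * exp ((-1) * lam n))"
      using b unfolding dirichlet_rep_def by (intro ABS) auto
    show "summable (\<lambda>n. cmod (a n - b n) * exp ((-1) * lam n))"
    proof (rule summable_comparison_test[OF _ summable_add[OF sa sb]])
      show "\<exists>N. \<forall>n\<ge>N. norm (cmod (a n - b n) * exp ((-1) * lam n)) \<le> cmod (a n) * exp ((-1) * lam n) + cmod (b n) * exp ((-1) * lam n)"
        by (intro exI allI impI) (simp add: distrib_right[symmetric] norm_triangle_ineq4 del: mult_minus_left)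
    qed
  qed
  then show ?thesis by (auto simp: fun_eq_iff)
qed

lemma NORM:
  assumes "dirichlet_rep lam beta f a"
  shows "HE_norm lam beta f = sqrt (\<Sum>n. (cmod (a n))\<^sup>2 * (beta n)\<^sup>2)"
proof -
  have "(THE a. dirichlet_rep lam beta f a) = a"
    using assms UNIQ by blast
  then show ?thesis unfolding HE_norm_def by simp
qed

lemma EVAL:
  assumes "dirichlet_rep lam beta f a"
  shows "cmod (f z) \<le> HE_norm lam beta f * sqrt (\<Sum>n. exp ((2*(- Re z)) * lam n) / (beta n)^2)"
proof -
  have sa: "summable (\<lambda>n. (cmod (a n))\<^sup>2 * (beta n)\<^sup>2)" and s: "(\<lambda>n. a n * exp (- of_real (lam n) * z)) sums f z"
    using assms unfolding dirichlet_rep_def by auto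
  have "cmod (f z) = norm (\<Sum>n. a n * exp (- of_real (lam n) * z))"
    using s sums_unique by metis
  also have "\<dots> \<le> (\<Sum>n. cmod (a n) * exp ((- Re z) * lam n))"
    by (rule norm_suminf_le[OF _ ABS[OF sa]]) (simp add: norm_mult norm_exp_eq_Re mult.commute)
  also have "\<dots> \<le> sqrt (\<Sum>n. (cmod (a n))\<^sup>2 * (beta n)\<^sup>2) * sqrt (\<Sum>n. exp ((2*(- Re z)) * lam n) / (beta n)^2)"
    by (rule CS[OF sa])
  finally show ?thesis using NORM[OF assms] by simp
qed

end



context dset begin

lemma norm_single: "HE_norm lam beta (\<lambda>z. v * exp (- of_real (lam k) * z)) = cmod v * beta k"
proof -
  have "(\<Sum>n. (cmod (if n = k then v else 0))\<^sup>2 * (beta n)\<^sup>2) = (\<Sum>n\<in>{k}. (cmod (if n = k then v else 0))\<^sup>2 * (beta n)\<^sup>2)"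
    by (rule suminf_finite) auto
  then have "(\<Sum>n. (cmod (if n = k then v else 0))\<^sup>2 * (beta n)\<^sup>2) = (cmod v * beta k)^2"
    by (simp add: power_mult_distrib)
  moreover have "cmod v * beta k \<ge> 0" using beta_pos[of k] by simp
  ultimately show ?thesis using NORM[OF single[of v k]] by simp
qed

lemma single_HE: "(\<lambda>z. v * exp (- of_real (lam k) * z)) \<in> HE lam beta"
  unfolding HE_def using single by blast

lemma const_eq: "(\<lambda>z. v * exp (- of_real (lam 0) * z)) = (\<lambda>z. v)"
  by (simp add: lam0)

lemma const_HE: "(\<lambda>z. v) \<in> HE lam beta"
  using single_HE[of v 0] by (simp only: const_eq)

lemma const_norm: "HE_norm lam beta (\<lambda>z. v) = cmod v * beta 0"
  using norm_single[of v 0] by (simp only: const_eq)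

lemma one_elem:
  "HE_norm lam beta ((\<lambda>z. of_real (1 / beta 0)) \<circ> \<phi>) = 1"
  "HE_norm lam beta (\<lambda>z. of_real (1 / beta 0)) = 1"
  "(\<lambda>z. of_real (1 / beta 0)) \<in> HE lam beta"
  using const_norm[of "of_real (1 / beta 0)"] beta_pos[of 0] const_HE
  by (auto simp: o_def norm_divide)

lemma norm_ge1:
  assumes "comp_op_bounded lam beta \<phi>"
  shows "comp_op_norm lam beta \<phi> \<ge> 1"
proof -
  obtain M where M: "\<And>f. f \<in> HE lam beta \<Longrightarrow> HE_norm lam beta (f \<circ> \<phi>) \<le> M * HE_norm lam beta f"
    using assms unfolding comp_op_bounded_def by blast
  define S where "S = {HE_norm lam beta (f \<circ> \<phi>) | f. f \<in> HE lam beta \<and> HE_norm lam beta f \<le> 1}"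
  have "1 \<in> S" unfolding S_def using one_elem by (intro CollectI exI[of _ "\<lambda>z. of_real (1 / beta 0)"]) auto
  moreover have "bdd_above S"
  proof (rule bdd_aboveI)
    fix y assume "y \<in> S"
    then obtain f where f: "f \<in> HE lam beta" "HE_norm lam beta f \<le> 1" and y: "y = HE_norm lam beta (f \<circ> \<phi>)"
      unfolding S_def by blast
    obtain a where a: "dirichlet_rep lam beta f a" using f(1) unfolding HE_def by blast
    have "HE_norm lam beta f \<ge> 0" using NORM[OF a] a unfolding dirichlet_rep_def
      by (simp add: suminf_nonneg)
    then have "M * HE_norm lam beta f \<le> max M 0"
      using f(2) by (smt (verit) mult_left_le mult_nonneg_nonneg mult_right_mono)
    then show "y \<le> max M 0" using M[OF f(1)] y by simp
  qed
  ultimately have "1 \<le> Sup S" by (rule cSup_upper)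
  then show ?thesis unfolding comp_op_norm_def S_def .
qed

lemma const_bounded:
  assumes "\<And>z. \<phi> z = c"
  shows "comp_op_bounded lam beta \<phi>"
  unfolding comp_op_bounded_def
proof (intro conjI ballI exI)
  fix f assume "f \<in> HE lam beta"
  have "f \<circ> \<phi> = (\<lambda>z. f c)" using assms by (auto simp: o_def)
  then show "f \<circ> \<phi> \<in> HE lam beta" using const_HE by simp
next
  fix f assume "f \<in> HE lam beta"
  then obtain a where a: "dirichlet_rep lam beta f a" unfolding HE_def by blast
  have "f \<circ> \<phi> = (\<lambda>z. f c)" using assms by (auto simp: o_def)
  then have "HE_norm lam beta (f \<circ> \<phi>) = cmod (f c) * beta 0" using const_norm by simp
  also have "\<dots> \<le> (HE_norm lam beta f * sqrt (\<Sum>n. exp ((2*(- Re c)) * lam n) / (beta n)^2)) * beta 0"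
    using EVAL[OF a, of c] beta_pos[of 0] by (intro mult_right_mono) auto
  finally show "HE_norm lam beta (f \<circ> \<phi>) \<le> (beta 0 * sqrt (\<Sum>n. exp ((2*(- Re c)) * lam n) / (beta n)^2)) * HE_norm lam beta f"
    by (simp add: mult_ac)
qed

lemma trans_rep:
  assumes a: "dirichlet_rep lam beta f a" and b: "Re b \<ge> 0"
  shows "dirichlet_rep lam beta (\<lambda>z. f (z + b)) (\<lambda>n. a n * exp (- of_real (lam n) * b))"
  unfolding dirichlet_rep_def
proof (intro conjI allI)
  have sa: "summable (\<lambda>n. (cmod (a n))\<^sup>2 * (beta n)\<^sup>2)" using a unfolding dirichlet_rep_def by simp
  have le: "cmod (a n * exp (- of_real (lam n) * b)) \<le> cmod (a n)" for n
  proof -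
    have "exp (- lam n * Re b) \<le> 1" using lam_nonneg[of n] b by (simp add: mult_nonneg_nonneg)
    then show ?thesis by (simp add: norm_mult norm_exp_eq_Re mult_left_le)
  qed
  show "summable (\<lambda>n. (cmod (a n * exp (- of_real (lam n) * b)))\<^sup>2 * (beta n)\<^sup>2)"
  proof (rule summable_comparison_test[OF _ sa])
    show "\<exists>N. \<forall>n\<ge>N. norm ((cmod (a n * exp (- of_real (lam n) * b)))\<^sup>2 * (beta n)\<^sup>2) \<le> (cmod (a n))\<^sup>2 * (beta n)\<^sup>2"
      using le by (intro exI allI impI) (simp add: mult_right_mono power_mono)
  qed
  fix z
  have "(\<lambda>n. a n * exp (- of_real (lam n) * (z + b))) sums f (z + b)"
    using a unfolding dirichlet_rep_def by simp
  moreover have eqn: "a n * exp (- of_real (lam n) * (z + b)) = a n * exp (- of_real (lam n) * b) * exp (- of_real (lam n) * z)" for n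
  proof -
    have "- of_real (lam n) * (z + b) = - of_real (lam n) * b + - of_real (lam n) * z" by (simp add: algebra_simps)
    then show ?thesis by (simp only: exp_add mult.assoc)
  qed
  ultimately show "(\<lambda>n. a n * exp (- of_real (lam n) * b) * exp (- of_real (lam n) * z)) sums f (z + b)"
    by (simp only: eqn)
qed

lemma trans_norm:
  assumes a: "dirichlet_rep lam beta f a" and b: "Re b \<ge> 0"
  shows "HE_norm lam beta (\<lambda>z. f (z + b)) \<le> HE_norm lam beta f"
proof -
  have sa: "summable (\<lambda>n. (cmod (a n))\<^sup>2 * (beta n)\<^sup>2)" using a unfolding dirichlet_rep_def by simp
  have sb: "summable (\<lambda>n. (cmod (a n * exp (- of_real (lam n) * b)))\<^sup>2 * (beta n)\<^sup>2)"
    using trans_rep[OF a b] unfolding dirichlet_rep_def by simp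
  have le: "cmod (a n * exp (- of_real (lam n) * b)) \<le> cmod (a n)" for n
  proof -
    have "exp (- lam n * Re b) \<le> 1" using lam_nonneg[of n] b by (simp add: mult_nonneg_nonneg)
    then show ?thesis by (simp add: norm_mult norm_exp_eq_Re mult_left_le)
  qed
  have "(\<Sum>n. (cmod (a n * exp (- of_real (lam n) * b)))\<^sup>2 * (beta n)\<^sup>2) \<le> (\<Sum>n. (cmod (a n))\<^sup>2 * (beta n)\<^sup>2)"
    using le by (intro suminf_le sb sa) (simp add: mult_right_mono power_mono)
  then show ?thesis using NORM[OF a] NORM[OF trans_rep[OF a b]] by simp
qed

lemma trans_bounded:
  assumes "\<And>z. \<phi> z = z + b" "Re b \<ge> 0"
  shows "comp_op_bounded lam beta \<phi>" and "comp_op_norm lam beta \<phi> = 1"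
proof -
  have eq: "f \<circ> \<phi> = (\<lambda>z. f (z + b))" for f :: "complex \<Rightarrow> complex" using assms(1) by (auto simp: o_def)
  have le: "HE_norm lam beta (f \<circ> \<phi>) \<le> HE_norm lam beta f" if fH: "f \<in> HE lam beta" for f
  proof -
    obtain a where "dirichlet_rep lam beta f a" using fH unfolding HE_def by blast
    then show ?thesis using trans_norm[OF _ assms(2)] eq by simp
  qed
  show "comp_op_bounded lam beta \<phi>"
    unfolding comp_op_bounded_def
  proof (intro conjI ballI exI)
    fix f assume "f \<in> HE lam beta"
    then obtain a where "dirichlet_rep lam beta f a" unfolding HE_def by blast
    then show "f \<circ> \<phi> \<in> HE lam beta" using trans_rep[OF _ assms(2)] eq unfolding HE_def by auto
  next
    fix f assume "f \<in> HE lam beta"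
    then show "HE_norm lam beta (f \<circ> \<phi>) \<le> 1 * HE_norm lam beta f" using le by simp
  qed
  show "comp_op_norm lam beta \<phi> = 1"
    unfolding comp_op_norm_def
  proof (rule cSup_eq_maximum)
    show "1 \<in> {HE_norm lam beta (f \<circ> \<phi>) |f. f \<in> HE lam beta \<and> HE_norm lam beta f \<le> 1}"
      using one_elem by (intro CollectI exI[of _ "\<lambda>z. of_real (1 / beta 0)"]) auto
    fix x assume "x \<in> {HE_norm lam beta (f \<circ> \<phi>) |f. f \<in> HE lam beta \<and> HE_norm lam beta f \<le> 1}"
    then show "x \<le> 1" using le by force
  qed
qed

end



context dset begin

definition PP :: "real \<Rightarrow> real" where
  "PP t = (\<Sum>n. exp ((2*(- t)) * lam n) / (beta n)^2)"

lemma PP_term_pos: "exp ((2*(- t)) * lam n) / (beta n)^2 > 0"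
  using beta_pos[of n] by simp

lemma PP_pos: "PP t > 0"
  unfolding PP_def by (rule suminf_pos[OF SUM]) (rule PP_term_pos)

lemma PP_mono: assumes "t1 \<le> t2" shows "PP t2 \<le> PP t1"
  unfolding PP_def
proof (rule suminf_le[OF _ SUM SUM])
  fix n
  have "(2*(- t2)) * lam n \<le> (2*(- t1)) * lam n"
    using assms lam_nonneg[of n] by (intro mult_right_mono) auto
  then show "exp ((2*(- t2)) * lam n) / (beta n)^2 \<le> exp ((2*(- t1)) * lam n) / (beta n)^2"
    using beta_pos[of n] by (intro divide_right_mono) auto
qed

lemma PP0: "PP 0 > 1 / (beta 0)^2"
proof -
  have "(\<Sum>n\<in>{..<2}. exp ((2*(- 0)) * lam n) / (beta n)^2) \<le> PP 0"
    unfolding PP_def by (rule sum_le_suminf[OF SUM]) (simp_all add: less_imp_le[OF PP_term_pos])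
  moreover have "(\<Sum>n\<in>{..<2}. exp ((2*(- 0)) * lam n) / (beta n)^2) = 1/(beta 0)^2 + 1/(beta 1)^2"
    by (simp add: numeral_2_eq_2 lam0)
  moreover have "1/(beta 1)^2 > 0" using beta_pos[of 1] by simp
  ultimately show ?thesis by linarith
qed

lemma KER:
  assumes cl: "\<forall>f\<in>HE lam beta. f \<circ> \<phi> \<in> HE lam beta"
    and M: "\<forall>f\<in>HE lam beta. HE_norm lam beta (f \<circ> \<phi>) \<le> M * HE_norm lam beta f"
  shows "PP (Re (\<phi> z)) \<le> M^2 * PP (Re z)"
proof -
  define w where "w = \<phi> z"
  define u where "u = Re w"
  define a where "a = (\<lambda>n. exp (- of_real (lam n) * cnj w) / of_real ((beta n)^2))"
  have na: "cmod (a n) = exp (- lam n * u) / (beta n)^2" for n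
    unfolding a_def u_def by (simp add: norm_divide norm_exp_eq_Re norm_power)
  have ee: "(exp (- lam n * u))^2 = exp ((2*(- u)) * lam n)" for n
  proof -
    have "exp ((2*(- u)) * lam n) = exp (2 * (- lam n * u))" by (rule arg_cong[where f=exp]) simp
    then show ?thesis by (simp only: exp_double)
  qed
  have tm: "(cmod (a n))\<^sup>2 * (beta n)\<^sup>2 = exp ((2*(- u)) * lam n) / (beta n)^2" for n
  proof -
    have gen: "(X / B) ^ 2 * B = X ^ 2 / B" if "B > 0" for X B :: real
      using that by (simp add: power2_eq_square field_simps)
    have "(cmod (a n))\<^sup>2 * (beta n)\<^sup>2 = (exp (- lam n * u))^2 / (beta n)^2"
      unfolding na using beta_pos[of n] by (intro gen) simp
    then show ?thesis by (simp only: ee)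
  qed
  have sa: "summable (\<lambda>n. (cmod (a n))\<^sup>2 * (beta n)\<^sup>2)"
    unfolding tm by (rule SUM)
  define f where "f = (\<lambda>z. \<Sum>n. a n * exp (- of_real (lam n) * z))"
  have rf: "dirichlet_rep lam beta f a" unfolding f_def by (rule MK[OF sa])
  have fH: "f \<in> HE lam beta" using rf unfolding HE_def by blast
  have nf: "HE_norm lam beta f = sqrt (PP u)"
    unfolding NORM[OF rf] tm PP_def ..
  have tw: "a n * exp (- of_real (lam n) * w) = of_real (exp ((2*(- u)) * lam n) / (beta n)^2)" for n
  proof -
    have "exp (- of_real (lam n) * cnj w) * exp (- of_real (lam n) * w) = exp (- of_real (lam n) * (w + cnj w))"
      by (simp add: exp_add[symmetric] algebra_simps)
    also have "\<dots> = exp (of_real ((2*(- u)) * lam n))"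
      unfolding complex_add_cnj u_def by (rule arg_cong[where f=exp]) simp
    finally show ?thesis unfolding a_def exp_of_real by simp
  qed
  have "(\<lambda>n. a n * exp (- of_real (lam n) * w)) sums of_real (PP u)"
    unfolding tw PP_def sums_of_real_iff by (rule summable_sums[OF SUM])
  moreover have "(\<lambda>n. a n * exp (- of_real (lam n) * w)) sums f w"
    using rf unfolding dirichlet_rep_def by simp
  ultimately have fw: "f w = of_real (PP u)" using sums_unique2 by blast
  have gH: "f \<circ> \<phi> \<in> HE lam beta" using cl fH by blast
  then obtain d where rd: "dirichlet_rep lam beta (f \<circ> \<phi>) d" unfolding HE_def by blast
  have ev: "cmod ((f \<circ> \<phi>) z) \<le> HE_norm lam beta (f \<circ> \<phi>) * sqrt (PP (Re z))"
    using EVAL[OF rd, of z] unfolding PP_def .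
  have gz: "cmod ((f \<circ> \<phi>) z) = PP u" using fw PP_pos[of u] unfolding w_def by simp
  have ng: "HE_norm lam beta (f \<circ> \<phi>) \<le> M * sqrt (PP u)" using M fH nf by auto
  define s1 where "s1 = sqrt (PP u)"
  define s2 where "s2 = sqrt (PP (Re z))"
  have s1p: "s1 > 0" unfolding s1_def using PP_pos by simp
  have s2p: "s2 \<ge> 0" unfolding s2_def using PP_pos[of "Re z"] by simp
  have "s1 * s1 \<le> (M * s1) * s2"
  proof -
    have "s1 * s1 = PP u" unfolding s1_def using PP_pos[of u] by simp
    also have "\<dots> \<le> HE_norm lam beta (f \<circ> \<phi>) * s2" using ev gz unfolding s2_def by simp
    also have "\<dots> \<le> (M * s1) * s2" using ng s2p unfolding s1_def by (intro mult_right_mono) auto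
    finally show ?thesis .
  qed
  then have "s1 \<le> M * s2" using s1p by (simp add: mult_ac)
  then have "s1^2 \<le> (M * s2)^2" using s1p by (intro power_mono) auto
  moreover have sq: "(sqrt (PP t))^2 = PP t" for t using PP_pos[of t] by simp
  ultimately show ?thesis unfolding s1_def s2_def u_def w_def
    by (simp add: power_mult_distrib sq)
qed

lemma LB:
  assumes M2: "M2 \<ge> 0"
  shows "\<exists>C\<ge>0. \<forall>x u. x \<le> 0 \<longrightarrow> PP u \<le> M2 * PP x \<longrightarrow> x - C \<le> u"
proof -
  define p0 where "p0 = 1 / (beta 0)^2"
  define P0 where "P0 = PP 0"
  have P0p0: "P0 > p0" unfolding P0_def p0_def by (rule PP0)
  have p0pos: "p0 > 0" unfolding p0_def using beta_pos[of 0] by simp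
  define r where "r = P0 / (P0 - p0)"
  define Q where "Q = M2 * r"
  define E where "E = max 1 Q + 1"
  define L where "L = lam 1"
  have Lpos: "L > 0" unfolding L_def using lam_pos[of 1] by simp
  define C where "C = ln E / (2 * L)"
  have E1: "E > 1" unfolding E_def by simp
  have C0: "C \<ge> 0" unfolding C_def using E1 Lpos by simp
  have QE: "E * (P0 - p0) \<ge> M2 * P0 + (P0 - p0)"
  proof -
    have "E \<ge> Q + 1" unfolding E_def by simp
    then have "E * (P0 - p0) \<ge> (Q + 1) * (P0 - p0)" using P0p0 by (intro mult_right_mono) auto
    moreover have "Q * (P0 - p0) = M2 * P0" unfolding Q_def r_def using P0p0 by simp
    moreover have "(Q + 1) * (P0 - p0) = Q * (P0 - p0) + (P0 - p0)" by (simp add: algebra_simps)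
    ultimately show ?thesis by linarith
  qed
  have EM: "E > M2"
  proof -
    have "r \<ge> 1" unfolding r_def using P0p0 p0pos by simp
    then have "M2 * 1 \<le> M2 * r" using M2 by (intro mult_left_mono) auto
    then have "Q \<ge> M2" unfolding Q_def by simp
    then show ?thesis unfolding E_def by simp
  qed
  show ?thesis
  proof (intro exI[of _ C] conjI allI impI C0)
    fix x u assume x0: "x \<le> 0" and Pu: "PP u \<le> M2 * PP x"
    show "x - C \<le> u"
    proof (rule ccontr)
      assume "\<not> x - C \<le> u"
      then have ux: "u < x - C" by simp
      define tx where "tx = (\<lambda>n. exp ((2*(- x)) * lam n) / (beta n)^2)"
      define tu where "tu = (\<lambda>n. exp ((2*(- u)) * lam n) / (beta n)^2)"
      define cc where "cc = (\<lambda>n::nat. if n = 0 then (E - 1) * p0 else (0::real))"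
      have tle: "E * tx n - cc n \<le> tu n" for n
      proof (cases "n = 0")
        case True
        have "tx 0 = p0" "tu 0 = p0" "cc 0 = (E - 1) * p0" unfolding tx_def tu_def cc_def p0_def by (simp_all add: lam0)
        moreover have "E * p0 - (E - 1) * p0 = p0" by (simp add: algebra_simps)
        ultimately show ?thesis using True by simp
      next
        case False
        then have ln: "lam n \<ge> L" unfolding L_def using lam_ge1 by simp
        have "ln E = 2 * C * L" unfolding C_def using Lpos by simp
        also have "\<dots> \<le> 2 * C * lam n" using ln C0 by (intro mult_left_mono) auto
        finally have "exp (ln E) \<le> exp (2 * C * lam n)" by simp
        then have Ee: "E \<le> exp (2 * C * lam n)" using E1 by simp
        then have "E * exp ((2*(- x)) * lam n) \<le> exp (2 * C * lam n) * exp ((2*(- x)) * lam n)"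
          by (intro mult_right_mono) auto
        also have "\<dots> = exp (2 * C * lam n + (2*(- x)) * lam n)" by (rule mult_exp_exp)
        also have "\<dots> \<le> exp ((2*(- u)) * lam n)"
        proof -
          have "2 * C * lam n + (2*(- x)) * lam n = (2*(C - x)) * lam n" by (simp add: algebra_simps)
          also have "\<dots> \<le> (2*(- u)) * lam n"
            using ux lam_nonneg[of n] by (intro mult_right_mono) auto
          finally show ?thesis by (simp only: exp_le_cancel_iff)
        qed
        finally have "E * exp ((2*(- x)) * lam n) \<le> exp ((2*(- u)) * lam n)" .
        then have "E * exp ((2*(- x)) * lam n) / (beta n)^2 \<le> exp ((2*(- u)) * lam n) / (beta n)^2"
          by (rule divide_right_mono) simp
        then show ?thesis unfolding tx_def tu_def cc_def using False by simp
      qed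
      have stx: "summable tx" and stu: "summable tu" unfolding tx_def tu_def by (rule SUM)+
      have scc: "cc sums ((E - 1) * p0)"
        using sums_single[of 0 "\<lambda>n. (E - 1) * p0"] unfolding cc_def by simp
      have "(\<lambda>n. E * tx n - cc n) sums (E * PP x - (E - 1) * p0)"
        unfolding PP_def tx_def[symmetric] by (intro sums_diff sums_mult summable_sums stx scc)
      moreover have "tu sums PP u" unfolding PP_def tu_def[symmetric] by (rule summable_sums[OF stu])
      ultimately have a1: "E * PP x - (E - 1) * p0 \<le> PP u"
        using tle by (rule sums_le[rotated 1])
      have a2: "PP x \<ge> P0" unfolding P0_def using x0 by (rule PP_mono)
      have "(E - M2) * P0 \<le> (E - M2) * PP x" using EM a2 by (intro mult_left_mono) auto
      also have "(E - M2) * PP x = E * PP x - M2 * PP x" by (simp add: algebra_simps)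
      finally have b1: "(E - M2) * P0 \<le> E * PP x - M2 * PP x" .
      have e1: "(E - M2) * P0 = E * P0 - M2 * P0" and e2: "(E - 1) * p0 = E * p0 - p0"
        and e3: "E * (P0 - p0) = E * P0 - E * p0" by (simp_all add: algebra_simps)
      show False using b1 a1 Pu QE P0p0 p0pos e1 e2 e3 by linarith
    qed
  qed
qed

end



context dset begin

lemma REB:
  assumes phi: "\<And>z. \<phi> z = z + b"
    and M: "\<forall>f\<in>HE lam beta. HE_norm lam beta (f \<circ> \<phi>) \<le> M * HE_norm lam beta f"
  shows "Re b \<ge> 0"
proof (rule ccontr)
  assume "\<not> Re b \<ge> 0"
  then have bn: "Re b < 0" by simp
  have bnd: "exp (- lam k * Re b) \<le> M" for k
  proof -
    define ek where "ek = (\<lambda>z::complex. 1 * exp (- of_real (lam k) * z))"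
    have eH: "ek \<in> HE lam beta" unfolding ek_def by (rule single_HE)
    have ne: "HE_norm lam beta ek = beta k" unfolding ek_def using norm_single[of 1 k] by simp
    have "ek \<circ> \<phi> = (\<lambda>z. exp (- of_real (lam k) * b) * exp (- of_real (lam k) * z))"
    proof
      fix z
      have "- of_real (lam k) * (z + b) = - of_real (lam k) * b + - of_real (lam k) * z" by (simp add: algebra_simps)
      then show "(ek \<circ> \<phi>) z = exp (- of_real (lam k) * b) * exp (- of_real (lam k) * z)"
        unfolding ek_def o_def phi by (simp only: exp_add mult_1)
    qed
    then have "HE_norm lam beta (ek \<circ> \<phi>) = exp (- lam k * Re b) * beta k"
      using norm_single[of "exp (- of_real (lam k) * b)" k] by (simp add: norm_exp_eq_Re)
    then have "exp (- lam k * Re b) * beta k \<le> M * beta k" using M eH ne by metis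
    then show ?thesis using beta_pos[of k] by simp
  qed
  have Mpos: "M > 0" using bnd[of 0] by (metis exp_gt_zero less_le_trans)
  have "eventually (\<lambda>k. (\<bar>ln M\<bar> + 1) / (- Re b) \<le> lam k) sequentially"
    using lam_inf by (simp add: filterlim_at_top)
  then obtain k where k: "(\<bar>ln M\<bar> + 1) / (- Re b) \<le> lam k"
    by (meson eventually_sequentially order_refl)
  have nb: "- Re b > 0" using bn by simp
  have "\<bar>ln M\<bar> + 1 \<le> lam k * (- Re b)" using k by (simp only: pos_divide_le_eq[OF nb])
  then have "ln M < - lam k * Re b" by simp
  then have "exp (ln M) < exp (- lam k * Re b)" by simp
  then show False using bnd[of k] Mpos by simp
qed

lemma HARD:
  assumes bd: "comp_op_bounded lam beta \<phi>" and ent: "\<phi> holomorphic_on UNIV"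
  shows "(\<exists>c. \<forall>z. \<phi> z = c) \<or> (\<exists>b. Re b \<ge> 0 \<and> (\<forall>z. \<phi> z = z + b))"
proof -
  obtain M where cl: "\<forall>f\<in>HE lam beta. f \<circ> \<phi> \<in> HE lam beta"
    and M: "\<forall>f\<in>HE lam beta. HE_norm lam beta (f \<circ> \<phi>) \<le> M * HE_norm lam beta f"
    using bd unfolding comp_op_bounded_def by blast
  have ker: "PP (Re (\<phi> z)) \<le> M^2 * PP (Re z)" for z using KER[OF cl M] .
  obtain C where C0: "C \<ge> 0" and LBC: "\<forall>x u. x \<le> 0 \<longrightarrow> PP u \<le> M^2 * PP x \<longrightarrow> x - C \<le> u"
    using LB[of "M^2"] by auto
  have lb: "Re z - C \<le> Re (\<phi> z)" if "Re z \<le> 0" for z using LBC ker that by blast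
  define L where "L = lam 1"
  have Lpos: "L > 0" unfolding L_def using lam_pos[of 1] by simp
  define h where "h = (\<lambda>z. exp (- of_real L * \<phi> z))"
  have "h = (\<lambda>z::complex. 1 * exp (- of_real (lam 1) * z)) \<circ> \<phi>" by (auto simp: h_def L_def o_def)
  then have "h \<in> HE lam beta" using cl single_HE by metis
  then obtain c where rc: "dirichlet_rep lam beta h c" unfolding HE_def by blast
  have sc2: "summable (\<lambda>n. (cmod (c n))\<^sup>2 * (beta n)\<^sup>2)" using rc unfolding dirichlet_rep_def by simp
  have sc: "summable (\<lambda>n. cmod (c n))" using ABS[OF sc2, of 0] by simp
  define T0 where "T0 = (\<Sum>n. cmod (c n))"
  have T0nn: "T0 \<ge> 0" unfolding T0_def using sc by (simp add: suminf_nonneg)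
  have right: "cmod (h z - c 0) \<le> exp (- L * Re z) * T0" if z0: "Re z \<ge> 0" for z
  proof -
    have s: "(\<lambda>n. c n * exp (- of_real (lam n) * z)) sums h z" using rc unfolding dirichlet_rep_def by simp
    have s1: "(\<lambda>n. if n = 0 then c n * exp (- of_real (lam n) * z) else 0) sums (c 0 * exp (- of_real (lam 0) * z))"
      by (rule sums_single)
    have "(\<lambda>n. c n * exp (- of_real (lam n) * z) - (if n = 0 then c n * exp (- of_real (lam n) * z) else 0)) sums (h z - c 0)"
      using sums_diff[OF s s1] by (simp add: lam0)
    then have hz: "h z - c 0 = (\<Sum>n. c n * exp (- of_real (lam n) * z) - (if n = 0 then c n * exp (- of_real (lam n) * z) else 0))"
      by (simp add: sums_iff)
    have bd1: "norm (c n * exp (- of_real (lam n) * z) - (if n = 0 then c n * exp (- of_real (lam n) * z) else 0)) \<le> exp (- L * Re z) * cmod (c n)" for n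
    proof (cases "n = 0")
      case True then show ?thesis by simp
    next
      case False
      then have "lam n \<ge> L" unfolding L_def using lam_ge1 by simp
      then have "- lam n * Re z \<le> - L * Re z" using z0 by (simp add: mult_right_mono)
      then have "exp (- lam n * Re z) \<le> exp (- L * Re z)" by simp
      then show ?thesis using False by (simp add: norm_mult norm_exp_eq_Re mult_left_mono mult.commute)
    qed
    have "cmod (h z - c 0) \<le> (\<Sum>n. exp (- L * Re z) * cmod (c n))"
      unfolding hz by (rule norm_suminf_le[OF bd1 summable_mult[OF sc]])
    also have "\<dots> = exp (- L * Re z) * T0" unfolding T0_def by (rule suminf_mult[OF sc])
    finally show ?thesis .
  qed
  have left: "cmod (h z) \<le> exp (L * C) * exp (- L * Re z)" if z0: "Re z \<le> 0" for z
  proof -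
    have "cmod (h z) = exp (- L * Re (\<phi> z))" unfolding h_def by (simp add: norm_exp_eq_Re)
    also have "\<dots> \<le> exp (- L * (Re z - C))" using lb[OF z0] Lpos by simp
    also have "\<dots> = exp (L * C) * exp (- L * Re z)" by (simp add: exp_add[symmetric] algebra_simps)
    finally show ?thesis .
  qed
  define G where "G = (\<lambda>z. exp (of_real L * z) * (h z - c 0))"
  have holG: "G holomorphic_on UNIV" unfolding G_def h_def
    by (intro holomorphic_intros holomorphic_on_compose[OF ent, unfolded o_def]) 
  have Gb: "cmod (G z) \<le> T0 + exp (L * C) + cmod (c 0)" for z
  proof (cases "Re z \<ge> 0")
    case True
    have "cmod (G z) = exp (L * Re z) * cmod (h z - c 0)" unfolding G_def by (simp add: norm_mult norm_exp_eq_Re)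
    also have "\<dots> \<le> exp (L * Re z) * (exp (- L * Re z) * T0)" using right[OF True] by (intro mult_left_mono) auto
    also have "\<dots> = T0" by (simp add: exp_minus field_simps)
    finally show ?thesis using exp_gt_zero[of "L*C"] norm_ge_zero[of "c 0"] by linarith
  next
    case False
    then have z0: "Re z \<le> 0" by simp
    have e1: "exp (L * Re z) \<le> 1" using z0 Lpos by (simp add: mult_nonneg_nonpos)
    have "cmod (G z) \<le> exp (L * Re z) * (cmod (h z) + cmod (c 0))"
      unfolding G_def by (simp add: norm_mult norm_exp_eq_Re mult_left_mono norm_triangle_ineq4)
    also have "\<dots> = exp (L * Re z) * cmod (h z) + exp (L * Re z) * cmod (c 0)" by (simp add: algebra_simps)
    also have "\<dots> \<le> exp (L * Re z) * (exp (L * C) * exp (- L * Re z)) + 1 * cmod (c 0)"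
      using left[OF z0] e1 by (intro add_mono mult_left_mono mult_right_mono) auto
    also have "\<dots> = exp (L * C) + cmod (c 0)" by (simp add: exp_minus field_simps)
    finally show ?thesis using T0nn by simp
  qed
  have "bounded (range G)" unfolding bounded_iff using Gb by blast
  then have "G constant_on UNIV" by (rule Liouville_theorem[OF holG])
  then obtain \<gamma> where G\<gamma>: "\<And>z. G z = \<gamma>" unfolding constant_on_def by blast
  have hform: "h z = c 0 + \<gamma> * exp (- of_real L * z)" for z
  proof -
    have "exp (- of_real L * z) * G z = h z - c 0"
      unfolding G_def by (simp add: exp_minus field_simps)
    then show ?thesis using G\<gamma>[of z] by (simp add: algebra_simps)
  qed
  have hnz: "h z \<noteq> 0" for z unfolding h_def by simp
  have key: "h z * deriv \<phi> z = h z - c 0" for z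
  proof -
    have d\<phi>: "(\<phi> has_field_derivative deriv \<phi> z) (at z)"
      using holomorphic_derivI[OF ent open_UNIV UNIV_I] .
    have d1: "(h has_field_derivative (h z * (- of_real L * deriv \<phi> z))) (at z)"
      unfolding h_def by (auto intro!: derivative_eq_intros d\<phi>)
    have hfun: "h = (\<lambda>z. c 0 + \<gamma> * exp (- of_real L * z))" using hform by auto
    have d2: "(h has_field_derivative (\<gamma> * (exp (- of_real L * z) * (- of_real L)))) (at z)"
      unfolding hfun by (auto intro!: derivative_eq_intros)
    have "h z * (- of_real L * deriv \<phi> z) = \<gamma> * (exp (- of_real L * z) * (- of_real L))"
      using DERIV_unique[OF d1 d2] .
    then have "of_real L * (h z * deriv \<phi> z) = of_real L * (\<gamma> * exp (- of_real L * z))"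
      by (simp add: algebra_simps)
    then have "h z * deriv \<phi> z = \<gamma> * exp (- of_real L * z)" using Lpos by simp
    then show ?thesis using hform[of z] by simp
  qed
  show ?thesis
  proof (cases "\<gamma> = 0")
    case True
    have "deriv \<phi> z = 0" for z using key[of z] hform[of z] hnz[of z] True by simp
    then have "\<And>x. x \<in> UNIV \<Longrightarrow> (\<phi> has_field_derivative 0) (at x within UNIV)"
      using holomorphic_derivI[OF ent open_UNIV] by metis
    then obtain c' where "\<forall>x\<in>UNIV. \<phi> x = c'" using has_field_derivative_zero_constant[OF convex_UNIV] by blast
    then show ?thesis by auto
  next
    case g: False
    show ?thesis
    proof (cases "c 0 = 0")
      case True
      have d1: "deriv \<phi> z = 1" for z using key[of z] hnz[of z] True by simp
      have "\<And>x. x \<in> UNIV \<Longrightarrow> ((\<lambda>z. \<phi> z - z) has_field_derivative 0) (at x within UNIV)"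
      proof -
        fix x :: complex
        have "(\<phi> has_field_derivative 1) (at x within UNIV)"
          using holomorphic_derivI[OF ent open_UNIV, of x] d1[of x] by simp
        then show "((\<lambda>z. \<phi> z - z) has_field_derivative 0) (at x within UNIV)"
          by (auto intro!: derivative_eq_intros)
      qed
      then obtain b where b: "\<forall>x\<in>UNIV. \<phi> x - x = b" using has_field_derivative_zero_constant[OF convex_UNIV] by blast
      then have phib: "\<And>z. \<phi> z = z + b" by (metis UNIV_I diff_add_cancel add.commute)
      have "Re b \<ge> 0" by (rule REB[OF phib M])
      then show ?thesis using phib by blast
    next
      case c0: False
      define z0 where "z0 = - Ln (- c 0 / \<gamma>) / of_real L"
      have "- of_real L * z0 = Ln (- c 0 / \<gamma>)" unfolding z0_def using Lpos by simp
      then have "exp (- of_real L * z0) = - c 0 / \<gamma>" using c0 g by simp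
      then have "h z0 = 0" using hform[of z0] g by simp
      then show ?thesis using hnz by blast
    qed
  qed
qed

end

theorem theorem4p7:
  fixes lam beta :: "nat \<Rightarrow> real" and \<phi> :: "complex \<Rightarrow> complex"
  assumes lam_mono: "strict_mono lam"
    and lam0: "lam 0 = 0"
    and lam_inf: "filterlim lam at_top sequentially"
    and lam_growth: "\<exists>C. eventually (\<lambda>n. ln (real (Suc n)) / lam n \<le> C) sequentially"
    and beta_pos: "\<And>n. beta n > 0"
    and condE: "filterlim (\<lambda>n. ln (beta n) / lam n) at_top sequentially"
    and entire: "\<phi> holomorphic_on UNIV"
  shows "(comp_op_bounded lam beta \<phi> \<longleftrightarrow>
           ((\<exists>c. \<forall>z. \<phi> z = c) \<or> (\<exists>b. Re b \<ge> 0 \<and> (\<forall>z. \<phi> z = z + b)))) \<and>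
         ((\<exists>c. \<forall>z. \<phi> z = c) \<longrightarrow> comp_op_norm lam beta \<phi> \<ge> 1) \<and>
         ((\<exists>b. Re b \<ge> 0 \<and> (\<forall>z. \<phi> z = z + b)) \<longrightarrow> comp_op_norm lam beta \<phi> = 1)"
proof -
  interpret dset lam beta
    using assms by (unfold_locales) auto
  have A: "comp_op_bounded lam beta \<phi> \<longleftrightarrow>
           ((\<exists>c. \<forall>z. \<phi> z = c) \<or> (\<exists>b. Re b \<ge> 0 \<and> (\<forall>z. \<phi> z = z + b)))"
  proof
    assume "comp_op_bounded lam beta \<phi>"
    then show "(\<exists>c. \<forall>z. \<phi> z = c) \<or> (\<exists>b. Re b \<ge> 0 \<and> (\<forall>z. \<phi> z = z + b))"
      using HARD entire by blast
  next
    assume "(\<exists>c. \<forall>z. \<phi> z = c) \<or> (\<exists>b. Re b \<ge> 0 \<and> (\<forall>z. \<phi> z = z + b))"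
    then show "comp_op_bounded lam beta \<phi>"
      using const_bounded trans_bounded(1) by blast
  qed
  have B: "(\<exists>c. \<forall>z. \<phi> z = c) \<longrightarrow> comp_op_norm lam beta \<phi> \<ge> 1"
    using const_bounded norm_ge1 by blast
  have C: "(\<exists>b. Re b \<ge> 0 \<and> (\<forall>z. \<phi> z = z + b)) \<longrightarrow> comp_op_norm lam beta \<phi> = 1"
    using trans_bounded(2) by blast
  show ?thesis using A B C by blast
qed

end
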